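(* Let $\chi,b,\nu,\mu>0$ with $b\ge\frac32\chi\mu$, and $c\in\mathbb{R}$. Let $r$ be globally Hölder continuous and bounded with $r^*:=\sup_{\mathbb{R}}r>0$, finite limits $r(\pm\infty)<0$, and $\min\{r(\infty),r(-\infty)\}\le r(x)$ for all $x$. Fix $\bar r$ with $\max\{r(-\infty),r(\infty)\}<\bar r<0$, a point $\bar x$ with $r(x)<\bar r$ for all $x<\bar x$, a point $\tilde x$ with $r(x)<\bar r$ for all $x>\tilde x$, let $\bar\theta$ be the positive root of $\theta^2+c\theta+\bar r=0$ and $\tilde\theta$ the positive root of $\theta^2-c\theta+\bar r=0$. Then for every $u\in\mathcal{E}_2^+$: $\mathcal{A}_u\big(\frac{r^*}{b-\chi\mu}e^{\bar\theta(\cdot-\bar x)}\big)(x)\le0$ for $x\in(-\infty,\bar x)$; $\mathcal{A}_u\big(\frac{r^*}{b-\chi\mu}\big)(x)\le0$ for $x\in\mathbb{R}$; and $\mathcal{A}_u\big(\frac{r^*}{b-\chi\mu}e^{-\tilde\theta(\cdot-\tilde x)}\big)(x)\le0$ for $x\in(\tilde x,\infty)$.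
   Context: $C^b_{\rm unif}(\mathbb{R})$: bounded uniformly continuous functions on $\mathbb{R}$. $\Psi(x;u)=\frac{\mu}{2\sqrt\nu}\int_{\mathbb{R}}e^{-\sqrt\nu|x-y|}u(y)dy$ (bounded solution of $\Psi''-\nu\Psi+\mu u=0$). $U_2^+(x)=\frac{r^*}{b-\chi\mu}e^{\bar\theta(x-\bar x)}$ for $x<\bar x$, $=\frac{r^*}{b-\chi\mu}$ for $\bar x\le x\le\tilde x$, $=\frac{r^*}{b-\chi\mu}e^{-\tilde\theta(x-\tilde x)}$ for $x>\tilde x$; $\mathcal{E}_2^+=\{u\in C^b_{\rm unif}(\mathbb{R}):0\le u(x)\le U_2^+(x)\ \forall x\}$. For $u\in\mathcal{E}_2^+$, $\mathcal{A}_u(U)(x)=U_{xx}+(c-\chi\Psi_x(x;u))U_x+(r(x)-\chi\nu\Psi(x;u)-(b-\chi\mu)U)U$. *)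

theory Defs
  imports "HOL-Analysis.Analysis"
begin

definition holder_continuous :: "(real \<Rightarrow> real) \<Rightarrow> bool" where
  "holder_continuous f \<longleftrightarrow>
     (\<exists>\<alpha> L. 0 < \<alpha> \<and> \<alpha> \<le> 1 \<and> 0 \<le> L \<and> (\<forall>x y. \<bar>f x - f y\<bar> \<le> L * \<bar>x - y\<bar> powr \<alpha>))"

definition Cb_unif :: "(real \<Rightarrow> real) set" where
  "Cb_unif = {u. bounded (range u) \<and> uniformly_continuous_on UNIV u}"

definition Psi :: "real \<Rightarrow> real \<Rightarrow> (real \<Rightarrow> real) \<Rightarrow> real \<Rightarrow> real" where
  "Psi \<nu> \<mu> u x = \<mu> / (2 * sqrt \<nu>) * (\<integral>y. exp (- sqrt \<nu> * \<bar>x - y\<bar>) * u y \<partial>lborel)"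

definition U2plus :: "real \<Rightarrow> real \<Rightarrow> real \<Rightarrow> real \<Rightarrow> real \<Rightarrow> real \<Rightarrow> real \<Rightarrow> real \<Rightarrow> real \<Rightarrow> real" where
  "U2plus rs b chi \<mu> \<theta>b xb \<theta>t xt x =
     (if x < xb then rs / (b - chi * \<mu>) * exp (\<theta>b * (x - xb))
      else if x \<le> xt then rs / (b - chi * \<mu>)
      else rs / (b - chi * \<mu>) * exp (- \<theta>t * (x - xt)))"

definition E2plus :: "real \<Rightarrow> real \<Rightarrow> real \<Rightarrow> real \<Rightarrow> real \<Rightarrow> real \<Rightarrow> real \<Rightarrow> real \<Rightarrow> (real \<Rightarrow> real) set" where
  "E2plus rs b chi \<mu> \<theta>b xb \<theta>t xt =
     {u \<in> Cb_unif. \<forall>x. 0 \<le> u x \<and> u x \<le> U2plus rs b chi \<mu> \<theta>b xb \<theta>t xt x}"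

definition Aop :: "real \<Rightarrow> real \<Rightarrow> real \<Rightarrow> real \<Rightarrow> real \<Rightarrow> (real \<Rightarrow> real) \<Rightarrow> (real \<Rightarrow> real)
                    \<Rightarrow> (real \<Rightarrow> real) \<Rightarrow> real \<Rightarrow> real" where
  "Aop chi \<mu> \<nu> b c r u U x =
     deriv (deriv U) x + (c - chi * deriv (Psi \<nu> \<mu> u) x) * deriv U x
     + (r x - chi * \<nu> * Psi \<nu> \<mu> u x - (b - chi * \<mu>) * U x) * U x"

end

theory Submission
  imports Defs
begin

lemma exp_right_int:
  fixes a x :: real assumes "a > 0"
  shows "((\<lambda>y. exp (-a*y)) has_integral exp (-a*x)/a) {x..}"
  using has_integral_exp_minus_to_infinity[OF assms] .

lemma exp_left_int:
  fixes a x :: real assumes "a > 0"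
  shows "((\<lambda>y. exp (a*y)) has_integral exp (a*x)/a) {..x}"
proof -
  have h: "((\<lambda>y. exp (-a*y)) has_integral exp (a*x)/a) {-x..}"
    using has_integral_exp_minus_to_infinity[OF assms, of "-x"] by simp
  have ai: "(\<lambda>y. exp (-a*y)) absolutely_integrable_on {-x..}"
    using h by (intro nonnegative_absolutely_integrable_1) (auto simp: integrable_on_def)
  have "(\<lambda>y. exp (a*(-y))) absolutely_integrable_on {-x..} \<and> integral {-x..} (\<lambda>y. exp (a*(-y))) = exp (a*x)/a"
    using ai h integral_unique by auto
  then have "(\<lambda>y. exp (a*y)) absolutely_integrable_on {..x} \<and> integral {..x} (\<lambda>y. exp (a*y)) = exp (a*x)/a"
    using has_absolute_integral_reflect_real[of "{-x..}" "{..x}" "\<lambda>y. exp (a*y)" "exp (a*x)/a"]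
    by auto
  then show ?thesis
    by (metis absolutely_integrable_on_def has_integral_integral)
qed

lemma int_left:
  fixes a x M :: real and w :: "real \<Rightarrow> real"
  assumes "a > 0" "continuous_on UNIV w" "\<And>y. \<bar>w y\<bar> \<le> M"
  shows "(\<lambda>y. exp (a*y) * w y) integrable_on {..x}"
proof (rule measurable_bounded_by_integrable_imp_integrable_real)
  show "(\<lambda>y. exp (a*y) * w y) \<in> borel_measurable (lebesgue_on {..x})"
    by (intro continuous_imp_measurable_on_sets_lebesgue continuous_intros continuous_on_subset[OF assms(2)]) auto
  show "(\<lambda>y. M * exp (a*y)) integrable_on {..x}"
    using has_integral_mult_right[OF exp_left_int[OF assms(1), of x], of M]
    by (auto simp: integrable_on_def)
  show "\<bar>exp (a*y) * w y\<bar> \<le> M * exp (a*y)" for y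
    using assms(3)[of y] by (simp add: abs_mult mult.commute)
qed auto

lemma int_right:
  fixes a x M :: real and w :: "real \<Rightarrow> real"
  assumes "a > 0" "continuous_on UNIV w" "\<And>y. \<bar>w y\<bar> \<le> M"
  shows "(\<lambda>y. exp (-a*y) * w y) integrable_on {x..}"
proof (rule measurable_bounded_by_integrable_imp_integrable_real)
  show "(\<lambda>y. exp (-a*y) * w y) \<in> borel_measurable (lebesgue_on {x..})"
    by (intro continuous_imp_measurable_on_sets_lebesgue continuous_intros continuous_on_subset[OF assms(2)]) auto
  show "(\<lambda>y. M * exp (-a*y)) integrable_on {x..}"
    using has_integral_mult_right[OF exp_right_int[OF assms(1), of x], of M]
    by (auto simp: integrable_on_def)
  show "\<bar>exp (-a*y) * w y\<bar> \<le> M * exp (-a*y)" for y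
    using assms(3)[of y] by (simp add: abs_mult mult.commute)
qed auto

lemma whole_int:
  fixes s x M :: real and w :: "real \<Rightarrow> real"
  assumes s: "s > 0" and wc: "continuous_on UNIV w" and wb: "\<And>y. \<bar>w y\<bar> \<le> M"
  shows "((\<lambda>y. exp (- s * \<bar>x - y\<bar>) * w y) has_integral
           (exp (-s*x) * integral {..x} (\<lambda>y. exp (s*y) * w y)
            + exp (s*x) * integral {x..} (\<lambda>y. exp (-s*y) * w y))) UNIV"
proof -
  have l: "((\<lambda>y. exp (- s * \<bar>x - y\<bar>) * w y) has_integral
           (exp (-s*x) * integral {..x} (\<lambda>y. exp (s*y) * w y))) {..x}"
  proof (rule has_integral_eq[OF _ has_integral_mult_right[OF integrable_integral[OF int_left[OF s wc wb]]]])
    fix y assume "y \<in> {..x}"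
    then have "- s * \<bar>x - y\<bar> = -s*x + s*y" by (simp add: algebra_simps)
    then have "exp (- s * \<bar>x - y\<bar>) = exp (-s*x) * exp (s*y)" by (simp only: exp_add)
    then show "exp (-s*x) * (exp (s*y) * w y) = exp (- s * \<bar>x - y\<bar>) * w y"
      by simp
  qed
  have r: "((\<lambda>y. exp (- s * \<bar>x - y\<bar>) * w y) has_integral
           (exp (s*x) * integral {x..} (\<lambda>y. exp (-s*y) * w y))) {x..}"
  proof (rule has_integral_eq[OF _ has_integral_mult_right[OF integrable_integral[OF int_right[OF s wc wb]]]])
    fix y assume "y \<in> {x..}"
    then have "- s * \<bar>x - y\<bar> = s*x + -s*y" by (simp add: algebra_simps)
    then have "exp (- s * \<bar>x - y\<bar>) = exp (s*x) * exp (-s*y)" by (simp only: exp_add)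
    then show "exp (s*x) * (exp (-s*y) * w y) = exp (- s * \<bar>x - y\<bar>) * w y"
      by simp
  qed
  have "{..x} \<inter> {x..} = {x}" by auto
  then have "negligible ({..x} \<inter> {x..})" by simp
  moreover have "{..x} \<union> {x..} = (UNIV::real set)" by auto
  ultimately show ?thesis using has_integral_Un[OF l r] by simp
qed

lemma psi_int:
  fixes s x M :: real and u :: "real \<Rightarrow> real"
  assumes s: "s > 0" and uc: "continuous_on UNIV u" and ub: "\<And>y. \<bar>u y\<bar> \<le> M"
  shows "(\<integral>y. exp (- s * \<bar>x - y\<bar>) * u y \<partial>lborel) =
           exp (-s*x) * integral {..x} (\<lambda>y. exp (s*y) * u y)
            + exp (s*x) * integral {x..} (\<lambda>y. exp (-s*y) * u y)"
proof -
  define f where "f = (\<lambda>y. exp (- s * \<bar>x - y\<bar>) * u y)"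
  have hi: "(f has_integral (exp (-s*x) * integral {..x} (\<lambda>y. exp (s*y) * u y)
            + exp (s*x) * integral {x..} (\<lambda>y. exp (-s*y) * u y))) UNIV"
    unfolding f_def by (rule whole_int[OF s uc ub])
  have uac: "continuous_on UNIV (\<lambda>y. \<bar>u y\<bar>)" by (intro continuous_intros uc)
  have "\<And>y. \<bar>\<bar>u y\<bar>\<bar> \<le> M" using ub by simp
  from whole_int[OF s uac this, of x]
  have "(\<lambda>y. norm (f y)) integrable_on UNIV"
    unfolding f_def by (auto simp: integrable_on_def abs_mult)
  with hi have "f absolutely_integrable_on UNIV"
    by (auto simp: absolutely_integrable_on_def integrable_on_def)
  then have il: "integrable lebesgue f"
    by (simp add: set_integrable_def)
  have fm: "f \<in> borel_measurable lborel"
    unfolding f_def by (simp, intro borel_measurable_continuous_onI continuous_intros uc)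
  have "integral UNIV f = (\<integral>y. f y \<partial>lebesgue)" using integral_lebesgue[OF il] .
  also have "\<dots> = (\<integral>y. f y \<partial>lborel)" by (rule integral_completion[OF fm])
  finally have "integral UNIV f = (\<integral>y. f y \<partial>lborel)" .
  then show ?thesis using integral_unique[OF hi] unfolding f_def by simp
qed

lemma A_deriv:
  fixes s x M :: real and u :: "real \<Rightarrow> real"
  assumes s: "s > 0" and uc: "continuous_on UNIV u" and ub: "\<And>y. \<bar>u y\<bar> \<le> M"
  shows "((\<lambda>z. integral {..z} (\<lambda>y. exp (s*y) * u y)) has_real_derivative exp (s*x) * u x) (at x)"
proof -
  define g where "g = (\<lambda>y. exp (s*y) * u y)"
  have gc: "continuous_on UNIV g" unfolding g_def by (intro continuous_intros uc)
  have "((\<lambda>z. integral {x-1..z} g) has_real_derivative g x) (at x within {x-1..x+1})"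
    by (rule integral_has_real_derivative) (auto intro: continuous_on_subset[OF gc])
  then have d: "((\<lambda>z. integral {x-1..z} g) has_real_derivative g x) (at x)"
    by (simp add: at_within_Icc_at)
  have d2: "((\<lambda>z. integral {..x-1} g + integral {x-1..z} g) has_real_derivative g x) (at x)"
    using DERIV_add[OF DERIV_const d] by simp
  have gx: "g x = exp (s*x) * u x" by (simp add: g_def)
  show ?thesis
  proof (rule has_field_derivative_transform_within_open[OF d2[unfolded gx], of "{x-1<..}"])
    fix z assume z: "z \<in> {x-1<..}"
    have i1: "g integrable_on {..x-1}" unfolding g_def by (rule int_left[OF s uc ub])
    have i2: "g integrable_on {x-1..z}" by (rule integrable_continuous_interval, rule continuous_on_subset[OF gc]) auto
    have "{..x-1} \<inter> {x-1..z} = {x-1}" using z by auto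
    then have n: "negligible ({..x-1} \<inter> {x-1..z})" by simp
    have "{..x-1} \<union> {x-1..z} = {..z}" using z by auto
    then show "integral {..x-1} g + integral {x-1..z} g = integral {..z} (\<lambda>y. exp (s*y) * u y)"
      using integral_Un[OF i1 i2 n] unfolding g_def by simp
  qed (auto simp: g_def)
qed

lemma B_deriv:
  fixes s x M :: real and u :: "real \<Rightarrow> real"
  assumes s: "s > 0" and uc: "continuous_on UNIV u" and ub: "\<And>y. \<bar>u y\<bar> \<le> M"
  shows "((\<lambda>z. integral {z..} (\<lambda>y. exp (-s*y) * u y)) has_real_derivative - (exp (-s*x) * u x)) (at x)"
proof -
  define g where "g = (\<lambda>y. exp (-s*y) * u y)"
  have gc: "continuous_on UNIV g" unfolding g_def by (intro continuous_intros uc)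
  have "((\<lambda>z. integral {z..x+1} g) has_real_derivative - g x) (at x within {x-1..x+1})"
    by (rule integral_has_real_derivative') (auto intro: continuous_on_subset[OF gc])
  then have d: "((\<lambda>z. integral {z..x+1} g) has_real_derivative - g x) (at x)"
    by (simp add: at_within_Icc_at)
  have d2: "((\<lambda>z. integral {z..x+1} g + integral {x+1..} g) has_real_derivative - g x) (at x)"
    using DERIV_add[OF d DERIV_const] by simp
  have gx: "g x = exp (-s*x) * u x" by (simp add: g_def)
  show ?thesis
  proof (rule has_field_derivative_transform_within_open[OF d2[unfolded gx], of "{..<x+1}"])
    fix z assume z: "z \<in> {..<x+1}"
    have i1: "g integrable_on {x+1..}" unfolding g_def by (rule int_right[OF s uc ub])
    have i2: "g integrable_on {z..x+1}" by (rule integrable_continuous_interval, rule continuous_on_subset[OF gc]) auto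
    have "{z..x+1} \<inter> {x+1..} = {x+1}" using z by auto
    then have n: "negligible ({z..x+1} \<inter> {x+1..})" by simp
    have "{z..x+1} \<union> {x+1..} = {z..}" using z by auto
    then show "integral {z..x+1} g + integral {x+1..} g = integral {z..} (\<lambda>y. exp (-s*y) * u y)"
      using integral_Un[OF i2 i1 n] unfolding g_def by simp
  qed (auto simp: g_def)
qed

lemma psi_deriv:
  fixes s x M :: real and u :: "real \<Rightarrow> real"
  assumes s: "s > 0" and uc: "continuous_on UNIV u" and ub: "\<And>y. \<bar>u y\<bar> \<le> M"
  shows "((\<lambda>x. \<integral>y. exp (- s * \<bar>x - y\<bar>) * u y \<partial>lborel) has_real_derivative
           s * (exp (s*x) * integral {x..} (\<lambda>y. exp (-s*y) * u y)
                - exp (-s*x) * integral {..x} (\<lambda>y. exp (s*y) * u y))) (at x)"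
proof -
  have eq: "(\<lambda>x. \<integral>y. exp (- s * \<bar>x - y\<bar>) * u y \<partial>lborel) =
     (\<lambda>x. exp (-s*x) * integral {..x} (\<lambda>y. exp (s*y) * u y)
            + exp (s*x) * integral {x..} (\<lambda>y. exp (-s*y) * u y))"
    using psi_int[OF s uc ub] by blast
  have e: "exp (-s*x) * exp (s*x) = 1" by (simp flip: exp_add)
  show ?thesis unfolding eq
    apply (rule derivative_eq_intros A_deriv[OF s uc ub] B_deriv[OF s uc ub] refl)+
    using e by (simp add: algebra_simps)
qed

lemma alg1:
  fixes V L R s \<theta> chi \<mu> b rx rbar c \<nu> :: real
  assumes "V > 0" "L \<ge> 0" "R \<ge> 0" "s > 0" "\<theta> > 0" "(\<theta> + s) * L \<le> V"
    "chi > 0" "\<mu> > 0" "b \<ge> 3/2 * chi * \<mu>" "rx < rbar" "\<theta>\<^sup>2 + c * \<theta> + rbar = 0" "\<nu> = s * s"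
  shows "\<theta> * \<theta> * V + (c - chi * (\<mu> / (2 * s) * (s * (R - L)))) * (\<theta> * V)
          + (rx - chi * \<nu> * (\<mu> / (2 * s) * (L + R)) - (b - chi * \<mu>) * V) * V \<le> 0"
proof -
  have nu: "chi * \<nu> * (\<mu> / (2 * s) * (L + R)) = chi * \<mu> / 2 * s * (L + R)"
    using assms(4,12) by (simp add: field_simps)
  have d: "\<mu> / (2 * s) * (s * (R - L)) = \<mu> / 2 * (R - L)" using assms(4) by (simp add: field_simps)
  define st where "st = (\<theta>\<^sup>2 + c * \<theta> + rx) + chi * \<mu> / 2 * ((\<theta> - s) * L - (\<theta> + s) * R) - (b - chi * \<mu>) * V"
  have eq: "\<theta> * \<theta> * V + (c - chi * (\<mu> / (2 * s) * (s * (R - L)))) * (\<theta> * V)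
          + (rx - chi * \<nu> * (\<mu> / (2 * s) * (L + R)) - (b - chi * \<mu>) * V) * V = V * st"
    unfolding nu d st_def by (simp add: field_simps power2_eq_square)
  have a1: "\<theta>\<^sup>2 + c * \<theta> + rx < 0" using assms(10,11) by linarith
  have a2: "(\<theta> - s) * L \<le> V" using assms(2,4,6) by (smt (verit) mult_right_mono)
  have a3: "(\<theta> + s) * R \<ge> 0" using assms(3,4,5) by simp
  have cm: "chi * \<mu> / 2 > 0" using assms(7,8) by simp
  have a4: "chi * \<mu> / 2 * ((\<theta> - s) * L - (\<theta> + s) * R) \<le> chi * \<mu> / 2 * V"
    using a2 a3 cm by (intro mult_left_mono) auto
  have a5: "(b - chi * \<mu>) * V \<ge> chi * \<mu> / 2 * V" using assms(1,9) by (intro mult_right_mono) (auto simp: mult.commute)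
  have "st \<le> 0" unfolding st_def using a1 a4 a5 by linarith
  then show ?thesis unfolding eq using assms(1) by (simp add: mult_nonneg_nonpos)
qed

theorem lemma4p1:
  fixes chi b \<nu> \<mu> c :: real and r :: "real \<Rightarrow> real"
    and rp rm rbar xb xt \<theta>b \<theta>t :: real
  assumes "chi > 0" "b > 0" "\<nu> > 0" "\<mu> > 0"
    and "b \<ge> 3/2 * chi * \<mu>"
    and "holder_continuous r" "bounded (range r)"
    and "Sup (range r) > 0"
    and "(r \<longlongrightarrow> rp) at_top" "(r \<longlongrightarrow> rm) at_bot" "rp < 0" "rm < 0"
    and "\<And>x. min rp rm \<le> r x"
    and "max rm rp < rbar" "rbar < 0"
    and "\<And>x. x < xb \<Longrightarrow> r x < rbar"
    and "\<And>x. x > xt \<Longrightarrow> r x < rbar"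
    and "\<theta>b > 0" "\<theta>b\<^sup>2 + c * \<theta>b + rbar = 0"
    and "\<theta>t > 0" "\<theta>t\<^sup>2 - c * \<theta>t + rbar = 0"
    and "u \<in> E2plus (Sup (range r)) b chi \<mu> \<theta>b xb \<theta>t xt"
  shows "(\<forall>x < xb. Aop chi \<mu> \<nu> b c r u
            (\<lambda>y. Sup (range r) / (b - chi * \<mu>) * exp (\<theta>b * (y - xb))) x \<le> 0)
       \<and> (\<forall>x. Aop chi \<mu> \<nu> b c r u (\<lambda>y. Sup (range r) / (b - chi * \<mu>)) x \<le> 0)
       \<and> (\<forall>x > xt. Aop chi \<mu> \<nu> b c r u
            (\<lambda>y. Sup (range r) / (b - chi * \<mu>) * exp (- \<theta>t * (y - xt))) x \<le> 0)"
proof -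
  note as = assms
  define rs where "rs = Sup (range r)"
  define K where "K = rs / (b - chi * \<mu>)"
  define s where "s = sqrt \<nu>"
  have s: "s > 0" using as(3) by (simp add: s_def)
  have nu: "\<nu> = s * s" using as(3) by (simp add: s_def)
  have cm0: "chi * \<mu> > 0" using as(1,4) by simp
  have bcm: "b - chi * \<mu> > 0" using cm0 as(5) by linarith
  have K: "K > 0" unfolding K_def rs_def using as(8) bcm by simp
  have bK: "(b - chi * \<mu>) * K = rs" unfolding K_def using bcm by simp
  have rle: "r x \<le> rs" for x
    unfolding rs_def using as(7) by (intro cSUP_upper) (auto simp: bounded_imp_bdd_above)
  have uC: "u \<in> Cb_unif" and ubd: "\<And>x. 0 \<le> u x \<and> u x \<le> U2plus rs b chi \<mu> \<theta>b xb \<theta>t xt x"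
    using as(22) unfolding E2plus_def rs_def by auto
  have uc: "continuous_on UNIV u"
    using uC unfolding Cb_unif_def by (auto intro: uniformly_continuous_imp_continuous)
  have xbt: "xb \<le> xt"
  proof (rule ccontr)
    assume "\<not> xb \<le> xt"
    then have "\<And>x. r x < rbar"
    proof -
      fix x assume "\<not> xb \<le> xt"
      show "r x < rbar"
      proof (cases "x < xb")
        case True then show ?thesis using as(16) by blast
      next
        case False then show ?thesis using as(17) \<open>\<not> xb \<le> xt\<close> by simp
      qed
    qed
    then have "Sup (range r) \<le> rbar" by (intro cSUP_least) (auto intro: less_imp_le)
    then show False using as(8,15) by linarith
  qed
  obtain M where ub: "\<And>y. \<bar>u y\<bar> \<le> M"
    using uC unfolding Cb_unif_def bounded_iff by auto
  define A where "A = (\<lambda>x. integral {..x} (\<lambda>y. exp (s*y) * u y))"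
  define B where "B = (\<lambda>x. integral {x..} (\<lambda>y. exp (-s*y) * u y))"
  define L where "L = (\<lambda>x. exp (-s*x) * A x)"
  define R where "R = (\<lambda>x. exp (s*x) * B x)"
  have L0: "L x \<ge> 0" for x
    unfolding L_def A_def using ubd
    by (intro mult_nonneg_nonneg integral_nonneg int_left[OF s uc ub]) auto
  have R0: "R x \<ge> 0" for x
    unfolding R_def B_def using ubd
    by (intro mult_nonneg_nonneg integral_nonneg int_right[OF s uc ub]) auto
  have Psi_eq: "Psi \<nu> \<mu> u x = \<mu> / (2 * s) * (L x + R x)" for x
    unfolding Psi_def L_def R_def A_def B_def s_def[symmetric]
    using psi_int[OF s uc ub, of x] by simp
  have dPsi: "deriv (Psi \<nu> \<mu> u) x = \<mu> / (2 * s) * (s * (R x - L x))" for x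
  proof -
    have "Psi \<nu> \<mu> u = (\<lambda>x. \<mu> / (2 * s) * (\<integral>y. exp (- s * \<bar>x - y\<bar>) * u y \<partial>lborel))"
      unfolding Psi_def s_def by simp
    moreover have "((\<lambda>x. \<mu> / (2 * s) * (\<integral>y. exp (- s * \<bar>x - y\<bar>) * u y \<partial>lborel))
        has_real_derivative \<mu> / (2 * s) * (s * (R x - L x))) (at x)"
      unfolding R_def L_def A_def B_def by (intro DERIV_cmult psi_deriv[OF s uc ub])
    ultimately show ?thesis by (simp add: DERIV_imp_deriv)
  qed
  have part2: "Aop chi \<mu> \<nu> b c r u (\<lambda>y. rs / (b - chi * \<mu>)) x \<le> 0" for x
  proof -
    have "Aop chi \<mu> \<nu> b c r u (\<lambda>y. K) x = (r x - chi * \<nu> * Psi \<nu> \<mu> u x - rs) * K"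
      unfolding Aop_def using bK by simp
    moreover have "Psi \<nu> \<mu> u x \<ge> 0" unfolding Psi_eq using L0 R0 s as(4) by simp
    moreover have "chi * \<nu> * Psi \<nu> \<mu> u x \<ge> 0" using calculation(2) as(1,3) by simp
    ultimately have "Aop chi \<mu> \<nu> b c r u (\<lambda>y. K) x \<le> 0" using rle[of x] K
      by (simp add: mult_nonpos_nonneg)
    then show ?thesis unfolding K_def .
  qed
  have part1: "Aop chi \<mu> \<nu> b c r u (\<lambda>y. rs / (b - chi * \<mu>) * exp (\<theta>b * (y - xb))) x \<le> 0"
    if x: "x < xb" for x
  proof -
    define V where "V = K * exp (\<theta>b * (x - xb))"
    have V: "V > 0" using K by (simp add: V_def)
    have d1: "deriv (\<lambda>y. K * exp (\<theta>b * (y - xb))) = (\<lambda>y. K * (\<theta>b * exp (\<theta>b * (y - xb))))"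
      by (rule ext, rule DERIV_imp_deriv) (auto intro!: derivative_eq_intros)
    have d2: "deriv (\<lambda>y. K * (\<theta>b * exp (\<theta>b * (y - xb)))) x = \<theta>b * \<theta>b * V"
      unfolding V_def by (rule DERIV_imp_deriv) (auto intro!: derivative_eq_intros)
    have "A x \<le> integral {..x} (\<lambda>y. (K * exp (-\<theta>b * xb)) * exp ((s + \<theta>b) * y))"
      unfolding A_def
    proof (rule integral_le[OF int_left[OF s uc ub]])
      show "(\<lambda>y. (K * exp (-\<theta>b * xb)) * exp ((s + \<theta>b) * y)) integrable_on {..x}"
        using has_integral_mult_right[OF exp_left_int[of "s + \<theta>b" x]] s as(18)
        by (auto simp: integrable_on_def)
      fix y assume "y \<in> {..x}"
      then have y: "y < xb" using x by simp
      then have "u y \<le> K * exp (\<theta>b * (y - xb))"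
        using ubd[of y] unfolding U2plus_def K_def by simp
      then have "exp (s*y) * u y \<le> exp (s*y) * (K * exp (\<theta>b * (y - xb)))"
        by (simp add: mult_left_mono)
      also have "\<dots> = (K * exp (-\<theta>b * xb)) * exp ((s + \<theta>b) * y)"
        by (simp add: algebra_simps flip: exp_add)
      finally show "exp (s*y) * u y \<le> (K * exp (-\<theta>b * xb)) * exp ((s + \<theta>b) * y)" .
    qed
    also have "\<dots> = (K * exp (-\<theta>b * xb)) * (exp ((s + \<theta>b) * x) / (s + \<theta>b))"
      using has_integral_mult_right[OF exp_left_int[of "s + \<theta>b" x]] s as(18)
      by (intro integral_unique) auto
    finally have "exp (-s*x) * A x \<le> exp (-s*x) * ((K * exp (-\<theta>b * xb)) * (exp ((s + \<theta>b) * x) / (s + \<theta>b)))"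
      by (rule mult_left_mono) auto
    also have "\<dots> = V / (s + \<theta>b)"
      unfolding V_def by (simp add: field_simps flip: exp_add)
    finally have "(\<theta>b + s) * L x \<le> V"
      unfolding L_def using s as(18) by (simp add: field_simps)
    note a = alg1[OF V L0[of x] R0[of x] s as(18) this as(1) as(4) as(5) as(16)[OF x] as(19) nu]
    have e: "Aop chi \<mu> \<nu> b c r u (\<lambda>y. K * exp (\<theta>b * (y - xb))) x =
      \<theta>b * \<theta>b * V + (c - chi * (\<mu> / (2 * s) * (s * (R x - L x)))) * (\<theta>b * V)
          + (r x - chi * \<nu> * (\<mu> / (2 * s) * (L x + R x)) - (b - chi * \<mu>) * V) * V"
      unfolding Aop_def d1 d2 dPsi Psi_eq V_def by (simp add: algebra_simps)
    show ?thesis unfolding K_def[symmetric] using e a by linarith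
  qed
  have part3: "Aop chi \<mu> \<nu> b c r u (\<lambda>y. rs / (b - chi * \<mu>) * exp (- \<theta>t * (y - xt))) x \<le> 0"
    if x: "x > xt" for x
  proof -
    define V where "V = K * exp (- \<theta>t * (x - xt))"
    have V: "V > 0" using K by (simp add: V_def)
    have d1: "deriv (\<lambda>y. K * exp (- \<theta>t * (y - xt))) = (\<lambda>y. K * (- \<theta>t * exp (- \<theta>t * (y - xt))))"
      by (rule ext, rule DERIV_imp_deriv) (auto intro!: derivative_eq_intros)
    have d2: "deriv (\<lambda>y. K * (- \<theta>t * exp (- \<theta>t * (y - xt)))) x = \<theta>t * \<theta>t * V"
      unfolding V_def by (rule DERIV_imp_deriv) (auto intro!: derivative_eq_intros)
    have "B x \<le> integral {x..} (\<lambda>y. (K * exp (\<theta>t * xt)) * exp (-(s + \<theta>t) * y))"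
      unfolding B_def
    proof (rule integral_le[OF int_right[OF s uc ub]])
      show "(\<lambda>y. (K * exp (\<theta>t * xt)) * exp (-(s + \<theta>t) * y)) integrable_on {x..}"
        using has_integral_mult_right[OF exp_right_int[of "s + \<theta>t" x]] s as(20)
        by (auto simp: integrable_on_def)
      fix y assume "y \<in> {x..}"
      then have y: "y > xt" "\<not> y < xb" using x xbt by auto
      then have "u y \<le> K * exp (- \<theta>t * (y - xt))"
        using ubd[of y] unfolding U2plus_def K_def by simp
      then have "exp (-s*y) * u y \<le> exp (-s*y) * (K * exp (- \<theta>t * (y - xt)))"
        by (simp add: mult_left_mono)
      also have "\<dots> = (K * exp (\<theta>t * xt)) * exp (-(s + \<theta>t) * y)"
        by (simp add: algebra_simps flip: exp_add)
      finally show "exp (-s*y) * u y \<le> (K * exp (\<theta>t * xt)) * exp (-(s + \<theta>t) * y)" .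
    qed
    also have "\<dots> = (K * exp (\<theta>t * xt)) * (exp (-(s + \<theta>t) * x) / (s + \<theta>t))"
      using has_integral_mult_right[OF exp_right_int[of "s + \<theta>t" x]] s as(20)
      by (intro integral_unique) auto
    finally have "exp (s*x) * B x \<le> exp (s*x) * ((K * exp (\<theta>t * xt)) * (exp (-(s + \<theta>t) * x) / (s + \<theta>t)))"
      by (rule mult_left_mono) auto
    also have "\<dots> = V / (s + \<theta>t)"
      unfolding V_def by (simp add: field_simps flip: exp_add)
    finally have Rb: "(\<theta>t + s) * R x \<le> V"
      unfolding R_def using s as(20) by (simp add: field_simps)
    have rb: "\<theta>t\<^sup>2 + (-c) * \<theta>t + rbar = 0" using as(21) by simp
    note a = alg1[OF V R0[of x] L0[of x] s as(20) Rb as(1) as(4) as(5) as(17)[OF x] rb nu]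
    have e: "Aop chi \<mu> \<nu> b c r u (\<lambda>y. K * exp (- \<theta>t * (y - xt))) x =
      \<theta>t * \<theta>t * V + (-c - chi * (\<mu> / (2 * s) * (s * (L x - R x)))) * (\<theta>t * V)
          + (r x - chi * \<nu> * (\<mu> / (2 * s) * (R x + L x)) - (b - chi * \<mu>) * V) * V"
      unfolding Aop_def d1 d2 dPsi Psi_eq V_def by (simp add: algebra_simps)
    show ?thesis unfolding K_def[symmetric] using e a by linarith
  qed
  show ?thesis using part1 part2 part3 unfolding rs_def by blast
qed

end
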